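(* Under Assumption 1, let $(x^k)_{k\in\mathbb{N}}$ be generated by PPGA. Then $x^k\in\mathrm{dom}(F)$ for all $k$, and: (i) $F(x^{k+1})+\frac{1/\alpha_k-L}{2g(x^{k+1})}\|x^{k+1}-x^k\|_2^2\le F(x^k)$ for all $k\in\mathbb{N}$; (ii) $\lim_{k\to\infty}C_k=\lim_{k\to\infty}F(x^k)=C$ for some $C\ge0$; (iii) $\lim_{k\to\infty}\frac{1/\alpha_k-L}{g(x^{k+1})}\|x^{k+1}-x^k\|_2^2=0$.
   Context: Let $f:\mathbb{R}^n\to(-\infty,+\infty]$ be proper lsc, $g,h:\mathbb{R}^n\to\mathbb{R}$, $\Omega:=\{x:g(x)\ne0\}$, $F(x):=\frac{f(x)+h(x)}{g(x)}$ on $\Omega\cap\mathrm{dom}(f)$ and $+\infty$ otherwise. Assumption 1: (i) $f$ locally Lipschitz on $\mathrm{dom}(f)\cap\Omega$; (ii) $g$ locally Lipschitz continuously differentiable and positive on $\Omega\cap\mathrm{dom}(f)$; (iii) $\nabla h$ is $L$-Lipschitz, $L>0$; (iv) $f+h\ge0$ on $\mathrm{dom}(f)$, $\Omega\cap\mathrm{dom}(f)\ne\emptyset$; (v) $\mathrm{prox}_{f-\gamma g}(x)\ne\emptyset$ for all $x$, $\gamma\ge0$; (vi) $F$ lsc and level bounded. $\mathrm{prox}_\varphi(x):=\arg\min_u\{\varphi(u)+\frac12\|u-x\|_2^2\}$. PPGA (parameterized proximal-gradient algorithm): choose $x^0\in\Omega\cap\mathrm{dom}(f)$ and step sizes $\alpha_k$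 with $0<\underline\alpha\le\alpha_k\le\overline\alpha<1/L$; for $k=0,1,\dots$ set $C_k:=F(x^k)$ and pick any $x^{k+1}\in\mathrm{prox}_{\alpha_k(f-C_kg)}(x^k-\alpha_k\nabla h(x^k))$. *)

theory Defs
  imports "HOL-Analysis.Analysis"
begin

definition edom :: "('a \<Rightarrow> ereal) \<Rightarrow> 'a set" where
  "edom f = {x. f x < \<infinity>}"

definition proper_fun :: "('a \<Rightarrow> ereal) \<Rightarrow> bool" where
  "proper_fun f \<longleftrightarrow> (\<forall>x. f x \<noteq> -\<infinity>) \<and> (\<exists>x. f x < \<infinity>)"

definition lsc_fun :: "('a::topological_space \<Rightarrow> ereal) \<Rightarrow> bool" where
  "lsc_fun f \<longleftrightarrow> (\<forall>x. f x \<le> Liminf (at x) f)"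

definition loc_lipschitz_on :: "'a::metric_space set \<Rightarrow> ('a \<Rightarrow> 'b::real_normed_vector) \<Rightarrow> bool" where
  "loc_lipschitz_on S f \<longleftrightarrow>
     (\<forall>x\<in>S. \<exists>e>0. \<exists>K. \<forall>y\<in>ball x e \<inter> S. \<forall>z\<in>ball x e \<inter> S.
        norm (f y - f z) \<le> K * dist y z)"

definition level_bounded :: "('a::metric_space \<Rightarrow> ereal) \<Rightarrow> bool" where
  "level_bounded F \<longleftrightarrow> (\<forall>a::real. bounded {x. F x \<le> ereal a})"

definition prox :: "('a::real_normed_vector \<Rightarrow> ereal) \<Rightarrow> 'a \<Rightarrow> 'a set" where
  "prox \<phi> x = {u. \<forall>v. \<phi> u + ereal (norm (u - x)^2 / 2) \<le> \<phi> v + ereal (norm (v - x)^2 / 2)}"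

definition Omg :: "('a \<Rightarrow> real) \<Rightarrow> 'a set" where
  "Omg g = {x. g x \<noteq> 0}"

definition Fobj :: "('a \<Rightarrow> ereal) \<Rightarrow> ('a \<Rightarrow> real) \<Rightarrow> ('a \<Rightarrow> real) \<Rightarrow> 'a \<Rightarrow> ereal" where
  "Fobj f g h x = (if x \<in> Omg g \<inter> edom f
                   then ereal ((real_of_ereal (f x) + h x) / g x) else \<infinity>)"

end

theory Submission
  imports Defs
begin

lemma descent:
  fixes h :: "'a::real_inner \<Rightarrow> real" and gradh :: "'a \<Rightarrow> 'a"
  assumes D: "\<And>u. (h has_derivative (\<lambda>v. gradh u \<bullet> v)) (at u)"
    and Lip: "\<And>u v. norm (gradh u - gradh v) \<le> L * dist u v"
  shows "h y \<le> h z + gradh z \<bullet> (y - z) + L / 2 * (norm (y - z))^2"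
proof -
  define d where "d = y - z"
  define \<phi> where "\<phi> t = h (z + t *\<^sub>R d) - t * (gradh z \<bullet> d) - L / 2 * t^2 * (norm d)^2" for t
  have "\<phi> 1 \<le> \<phi> 0"
  proof (rule DERIV_nonpos_imp_nonincreasing[of 0 1 \<phi>])
    fix t :: real assume t: "0 \<le> t" "t \<le> 1"
    have hd: "((\<lambda>t. h (z + t *\<^sub>R d)) has_derivative (\<lambda>s. gradh (z + t *\<^sub>R d) \<bullet> (s *\<^sub>R d))) (at t)"
      by (rule has_derivative_compose[OF _ D, where f'="\<lambda>s. s *\<^sub>R d"])
         (auto intro!: derivative_eq_intros)
    have "(\<phi> has_real_derivative (gradh (z + t *\<^sub>R d) \<bullet> d - gradh z \<bullet> d - L * t * (norm d)^2)) (at t)"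
      unfolding \<phi>_def
      apply (rule DERIV_diff)+
        apply (subst has_real_derivative_iff_has_vector_derivative)
      unfolding has_vector_derivative_def
        apply (rule has_derivative_eq_rhs[OF hd])
        apply (auto simp: inner_scaleR_right)[1]
       apply (auto intro!: derivative_eq_intros)
      done
    moreover have "gradh (z + t *\<^sub>R d) \<bullet> d - gradh z \<bullet> d - L * t * (norm d)^2 \<le> 0"
    proof -
      have "gradh (z + t *\<^sub>R d) \<bullet> d - gradh z \<bullet> d = (gradh (z + t *\<^sub>R d) - gradh z) \<bullet> d"
        by (simp add: inner_diff_left)
      also have "\<dots> \<le> norm (gradh (z + t *\<^sub>R d) - gradh z) * norm d"
        by (rule norm_cauchy_schwarz)
      also have "\<dots> \<le> L * dist (z + t *\<^sub>R d) z * norm d"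
        by (rule mult_right_mono[OF Lip]) simp
      also have "\<dots> = L * t * (norm d)^2" using t by (simp add: dist_norm power2_eq_square)
      finally show ?thesis by simp
    qed
    ultimately show "\<exists>y. (\<phi> has_real_derivative y) (at t) \<and> y \<le> 0" by blast
  qed simp
  then show ?thesis unfolding \<phi>_def d_def by (simp add: algebra_simps)
qed


lemma step_lemma:
  fixes f :: "'a::real_inner \<Rightarrow> ereal" and g h :: "'a \<Rightarrow> real" and gradh :: "'a \<Rightarrow> 'a"
  assumes proper: "proper_fun f"
    and D: "\<And>u. (h has_derivative (\<lambda>v. gradh u \<bullet> v)) (at u)"
    and Lip: "\<And>u v. norm (gradh u - gradh v) \<le> L * dist u v"
    and pos: "\<And>u. u \<in> Omg g \<inter> edom f \<Longrightarrow> g u > 0"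
    and nonneg: "\<And>u. u \<in> edom f \<Longrightarrow> f u + ereal (h u) \<ge> 0"
    and z: "z \<in> Omg g \<inter> edom f"
    and a: "0 < a" "L < 1 / a"
    and C: "C = (real_of_ereal (f z) + h z) / g z"
    and y: "y \<in> prox (\<lambda>u. ereal a * (f u - ereal (C * g u))) (z - a *\<^sub>R gradh z)"
  shows "y \<in> Omg g \<inter> edom f \<and> C \<ge> 0 \<and>
     real_of_ereal (f y) + h y + (1/a - L) / 2 * (norm (y - z))^2 \<le> C * g y"
proof -
  define w where "w = z - a *\<^sub>R gradh z"
  define d where "d = y - z"
  have gz: "g z > 0" using pos z by blast
  obtain fz where fz: "f z = ereal fz" using z proper unfolding edom_def proper_fun_def
    by (cases "f z") auto
  have fzh: "fz + h z \<ge> 0" using nonneg[of z] z fz by auto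
  have C0: "C \<ge> 0" using C fz fzh gz by simp
  have Cg: "C * g z = fz + h z" using C fz gz by simp
  have ineq: "ereal a * (f y - ereal (C * g y)) + ereal (norm (y - w)^2 / 2)
      \<le> ereal a * (f z - ereal (C * g z)) + ereal (norm (z - w)^2 / 2)"
    using y unfolding prox_def w_def by blast
  have "f y \<noteq> \<infinity>"
  proof
    assume "f y = \<infinity>"
    then have "ereal a * (f y - ereal (C * g y)) + ereal (norm (y - w)^2 / 2) = \<infinity>"
      using a by simp
    with ineq fz show False by simp
  qed
  moreover have "f y \<noteq> -\<infinity>" using proper unfolding proper_fun_def by blast
  ultimately obtain fy where fy: "f y = ereal fy" by (cases "f y") auto
  have ry: "a * (fy - C * g y) + norm (y - w)^2 / 2 \<le> a * (fz - C * g z) + norm (z - w)^2 / 2"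
    using ineq fy fz by simp
  have yw: "norm (y - w)^2 = norm d ^2 + 2 * a * (gradh z \<bullet> d) + a^2 * norm (gradh z)^2"
    unfolding w_def d_def power2_norm_eq_inner
    by (simp add: algebra_simps inner_diff_left inner_diff_right inner_add_left inner_add_right inner_commute power2_eq_square)
  have zw: "norm (z - w)^2 = a^2 * norm (gradh z)^2"
    unfolding w_def by (simp add: power_mult_distrib)
  have desc: "h y \<le> h z + gradh z \<bullet> d + L / 2 * (norm d)^2"
    unfolding d_def by (rule descent[OF D Lip])
  have r1: "fy - C * g y + norm d^2 / (2*a) + gradh z \<bullet> d \<le> - h z"
  proof -
    have "a * (fy - C * g y + norm d^2 / (2*a) + gradh z \<bullet> d) \<le> a * (- h z)"
      using ry yw zw Cg a by (simp add: algebra_simps power2_eq_square)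
    then show ?thesis using a by (simp only: mult_le_cancel_left_pos)
  qed
  have key: "fy + h y + (1/a - L) / 2 * (norm d)^2 \<le> C * g y"
  proof -
    have "(1/a - L) / 2 * (norm d)^2 = norm d^2 / (2*a) - L / 2 * (norm d)^2"
      using a by (simp add: field_simps)
    then show ?thesis using r1 desc by linarith
  qed
  have yd: "y \<in> edom f" using fy unfolding edom_def by simp
  have fyh: "fy + h y \<ge> 0" using nonneg[OF yd] fy by simp
  have "g y \<noteq> 0"
  proof (cases "d = 0")
    case True then show ?thesis using z unfolding d_def Omg_def by simp
  next
    case False
    then have "norm d ^2 > 0" by simp
    moreover have "1/a - L > 0" using a by simp
    ultimately have "(1/a - L) / 2 * (norm d)^2 > 0" by simp
    then have "C * g y > 0" using key fyh by linarith
    then show ?thesis by auto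
  qed
  then show ?thesis using yd key fy C0 unfolding Omg_def d_def by simp
qed

theorem mainTheorem9:
  fixes f :: "real^'n \<Rightarrow> ereal"
    and g h :: "real^'n \<Rightarrow> real"
    and gradg gradh :: "real^'n \<Rightarrow> real^'n"
    and L al au :: real
    and \<alpha> :: "nat \<Rightarrow> real"
    and x :: "nat \<Rightarrow> real^'n"
  assumes proper: "proper_fun f" and lsc: "lsc_fun f"
    and A1: "loc_lipschitz_on (edom f \<inter> Omg g) (\<lambda>u. real_of_ereal (f u))"
    and A2_deriv: "\<And>u. (g has_derivative (\<lambda>v. gradg u \<bullet> v)) (at u)"
    and A2_lip: "loc_lipschitz_on UNIV gradg"
    and A2_pos: "\<And>u. u \<in> Omg g \<inter> edom f \<Longrightarrow> g u > 0"
    and A3_deriv: "\<And>u. (h has_derivative (\<lambda>v. gradh u \<bullet> v)) (at u)"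
    and A3_lip: "\<And>u v. norm (gradh u - gradh v) \<le> L * dist u v"
    and L_pos: "L > 0"
    and A4_nonneg: "\<And>u. u \<in> edom f \<Longrightarrow> f u + ereal (h u) \<ge> 0"
    and A4_ne: "Omg g \<inter> edom f \<noteq> {}"
    and A5: "\<And>z \<gamma>. \<gamma> \<ge> 0 \<Longrightarrow> prox (\<lambda>u. f u - ereal (\<gamma> * g u)) z \<noteq> {}"
    and A6_lsc: "lsc_fun (Fobj f g h)"
    and A6_lb: "level_bounded (Fobj f g h)"
    and x0: "x 0 \<in> Omg g \<inter> edom f"
    and al_pos: "0 < al" and al_le: "\<And>k. al \<le> \<alpha> k" and au_ge: "\<And>k. \<alpha> k \<le> au"
    and au_lt: "au < 1 / L"
    and step: "\<And>k. x (Suc k) \<in> prox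
       (\<lambda>u. ereal (\<alpha> k) * (f u - ereal (real_of_ereal (Fobj f g h (x k)) * g u)))
       (x k - \<alpha> k *\<^sub>R gradh (x k))"
  shows "(\<forall>k. x k \<in> edom (Fobj f g h))
    \<and> (\<forall>k. Fobj f g h (x (Suc k))
            + ereal ((1 / \<alpha> k - L) / (2 * g (x (Suc k))) * (norm (x (Suc k) - x k))^2)
          \<le> Fobj f g h (x k))
    \<and> (\<exists>C::real. C \<ge> 0 \<and> (\<lambda>k. real_of_ereal (Fobj f g h (x k))) \<longlonglongrightarrow> C
                      \<and> (\<lambda>k. Fobj f g h (x k)) \<longlonglongrightarrow> ereal C)
    \<and> (\<lambda>k. (1 / \<alpha> k - L) / g (x (Suc k)) * (norm (x (Suc k) - x k))^2) \<longlonglongrightarrow> 0"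
proof -
  let ?F = "Fobj f g h"
  have aL: "\<And>k. 0 < \<alpha> k \<and> L < 1 / \<alpha> k"
  proof -
    fix k
    have p: "0 < \<alpha> k" using al_pos al_le[of k] by linarith
    have "1 / au \<le> 1 / \<alpha> k" using p au_ge[of k] by (simp add: frac_le)
    moreover have "L < 1 / au"
    proof -
      have aup: "au > 0" using p au_ge[of k] by linarith
      have "au * L < 1" using au_lt L_pos by (simp add: less_divide_eq)
      then show ?thesis using aup by (simp add: less_divide_eq mult.commute)
    qed
    ultimately show "0 < \<alpha> k \<and> L < 1 / \<alpha> k" using p by linarith
  qed
  have Fval: "\<And>u. u \<in> Omg g \<inter> edom f \<Longrightarrow> ?F u = ereal ((real_of_ereal (f u) + h u) / g u)"
    unfolding Fobj_def by simp
  have S: "\<And>k. x k \<in> Omg g \<inter> edom f \<Longrightarrow> x (Suc k) \<in> Omg g \<inter> edom f \<and>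
      (real_of_ereal (f (x k)) + h (x k)) / g (x k) \<ge> 0 \<and>
      real_of_ereal (f (x (Suc k))) + h (x (Suc k)) + (1/\<alpha> k - L) / 2 * (norm (x (Suc k) - x k))^2
        \<le> (real_of_ereal (f (x k)) + h (x k)) / g (x k) * g (x (Suc k))"
  proof -
    fix k assume xk: "x k \<in> Omg g \<inter> edom f"
    show "?thesis k"
    proof (rule step_lemma[OF proper A3_deriv A3_lip A2_pos A4_nonneg xk _ _ refl])
      show "0 < \<alpha> k" "L < 1 / \<alpha> k" using aL[of k] by auto
      show "x (Suc k) \<in> prox (\<lambda>u. ereal (\<alpha> k) * (f u - ereal ((real_of_ereal (f (x k)) + h (x k)) / g (x k) * g u)))
        (x k - \<alpha> k *\<^sub>R gradh (x k))" using step[of k] Fval[OF xk] by simp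
    qed
  qed
  have dom: "\<forall>k. x k \<in> Omg g \<inter> edom f"
  proof
    fix k show "x k \<in> Omg g \<inter> edom f"
    proof (induction k)
      case 0 show ?case using x0 .
    next
      case (Suc k) show ?case using S[OF Suc] by (elim conjE)
    qed
  qed
  define r where "r k = (real_of_ereal (f (x k)) + h (x k)) / g (x k)" for k
  define s where "s k = (1 / \<alpha> k - L) / g (x (Suc k)) * (norm (x (Suc k) - x k))^2" for k
  have Fr: "\<And>k. ?F (x k) = ereal (r k)" unfolding r_def by (rule Fval[OF dom[rule_format]])
  have r0: "\<And>k. r k \<ge> 0"
  proof -
    fix k show "r k \<ge> 0" unfolding r_def using S[OF dom[rule_format, of k]] by (elim conjE)
  qed
  have gpos: "\<And>k. g (x k) > 0" by (rule A2_pos[OF dom[rule_format]])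
  have s0: "\<And>k. s k \<ge> 0"
  proof -
    fix k
    have "1 / \<alpha> k - L \<ge> 0" using aL[of k] by simp
    then show "s k \<ge> 0" unfolding s_def using gpos[of "Suc k"]
      by (intro mult_nonneg_nonneg divide_nonneg_pos) auto
  qed
  have rs: "\<And>k. r (Suc k) + s k / 2 \<le> r k"
  proof -
    fix k
    have "real_of_ereal (f (x (Suc k))) + h (x (Suc k)) + (1/\<alpha> k - L) / 2 * (norm (x (Suc k) - x k))^2
        \<le> r k * g (x (Suc k))" unfolding r_def using S[OF dom[rule_format, of k]] by (elim conjE)
    then have "(real_of_ereal (f (x (Suc k))) + h (x (Suc k)) + (1/\<alpha> k - L) / 2 * (norm (x (Suc k) - x k))^2) / g (x (Suc k))
        \<le> r k" using gpos[of "Suc k"] by (simp add: divide_le_eq)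
    then show "r (Suc k) + s k / 2 \<le> r k" unfolding r_def s_def using gpos[of "Suc k"]
      by (simp add: add_divide_distrib mult.commute)
  qed
  have part1: "\<forall>k. x k \<in> edom ?F" using Fr unfolding edom_def by simp
  have part2: "\<forall>k. ?F (x (Suc k))
            + ereal ((1 / \<alpha> k - L) / (2 * g (x (Suc k))) * (norm (x (Suc k) - x k))^2)
          \<le> ?F (x k)"
  proof
    fix k
    have "(1 / \<alpha> k - L) / (2 * g (x (Suc k))) * (norm (x (Suc k) - x k))^2 = s k / 2"
      unfolding s_def by simp
    note e = this
    show "?F (x (Suc k))
            + ereal ((1 / \<alpha> k - L) / (2 * g (x (Suc k))) * (norm (x (Suc k) - x k))^2)
          \<le> ?F (x k)" unfolding e Fr using rs[of k] by simp
  qed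
  have dec: "decseq r" unfolding decseq_Suc_iff
  proof
    fix k show "r (Suc k) \<le> r k" using rs[of k] s0[of k] by linarith
  qed
  obtain C where C: "r \<longlonglongrightarrow> C" "\<forall>i. C \<le> r i"
    using decseq_convergent[OF dec, of 0] r0 by blast
  have C0: "C \<ge> 0" using LIMSEQ_le_const[OF C(1), of 0] r0 by blast
  have rr: "(\<lambda>k. real_of_ereal (?F (x k))) = r" using Fr by simp
  have re: "(\<lambda>k. ?F (x k)) = (\<lambda>k. ereal (r k))" using Fr by simp
  have part3: "\<exists>C::real. C \<ge> 0 \<and> (\<lambda>k. real_of_ereal (?F (x k))) \<longlonglongrightarrow> C
                      \<and> (\<lambda>k. ?F (x k)) \<longlonglongrightarrow> ereal C"
    using C C0 unfolding rr re by (intro exI[of _ C]) (simp add: tendsto_ereal)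
  have "(\<lambda>k. 2 * (r k - r (Suc k))) \<longlonglongrightarrow> 2 * (C - C)"
    by (intro tendsto_intros C(1) LIMSEQ_Suc)
  then have t: "(\<lambda>k. 2 * (r k - r (Suc k))) \<longlonglongrightarrow> 0" by simp
  have part4: "s \<longlonglongrightarrow> 0"
  proof (rule tendsto_sandwich[OF _ _ tendsto_const t])
    show "\<forall>\<^sub>F k in sequentially. 0 \<le> s k" using s0 by simp
    show "\<forall>\<^sub>F k in sequentially. s k \<le> 2 * (r k - r (Suc k))"
    proof (rule always_eventually, rule allI)
      fix k have "s k / 2 \<le> r k - r (Suc k)" using rs[of k] by linarith
      then show "s k \<le> 2 * (r k - r (Suc k))" by simp
    qed
  qed
  show ?thesis using part1 part2 part3 part4 unfolding s_def by blast
qed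

end
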